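(* Let $\vartheta=\vartheta_{B_3}^{\mathcal B,h}$ be a $3$-molecule. Then $\vartheta$ is ambiguous if and only if one of the following holds: (I) $|\mathcal B|=3$ and $h=1$ (i.e. $\vartheta$ is $K_4$); (II) $|\mathcal B|=2$ and $h=2$; (III) $|\mathcal B|=0$ and $h=3$ (i.e. $\vartheta$ is $K_{3,3}$).
   Context: Graphs are finite and undirected. The connectivity of a graph is the largest $k$ such that one must remove at least $k$ vertices to disconnect it (by convention $K_m$, $m\ge3$, has connectivity $m-1$). $k$-molecule: for $k,h\ge1$, $B_k=\{b_1,\dots,b_k\}$ and a set $\mathcal B$ of edges among vertices of $B_k$, $\vartheta_{B_k}^{\mathcal B,h}$ is the graph with vertex set $B_k\cup\{v_1,\dots,v_h\}$ and edge set $\mathcal B\cup\{v_ib_j:1\le i\le h,1\le j\le k\}$, where it is required that $h\ge k-k'$, $k'$ being the connectivity of the subgraph induced by $B_k$. For a graph $G$ and $B\subseteq V_G$ with $|B|=k$, $(G,B)$ is a $k$-premolecule if there is a $k$-molecule $\vartheta_{B_k}^{\mathcal B,h}$ and an isomorphism $G\to\vartheta_{B_k}^{\mathcal B,h}$ mapping $B$ onto $B_k$. An abstract $k$-molecule $G$ is non ambiguous if there is exactly one $B\subseteq V_G$ such that $(G,B)$ is a $k$-premolecule, and ambiguous otherwise; a $k$-molecule is (non) ambiguous if it is so as a graph. *)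

theory Defs
  imports Main
begin

definition simple_graph :: "'a set \<Rightarrow> 'a set set \<Rightarrow> bool" where
  "simple_graph V E \<longleftrightarrow> finite V \<and> (\<forall>e\<in>E. e \<subseteq> V \<and> card e = 2)"

definition graph_connected :: "'a set \<Rightarrow> 'a set set \<Rightarrow> bool" where
  "graph_connected V E \<longleftrightarrow>
     (\<forall>x\<in>V. \<forall>y\<in>V. (x, y) \<in> {(a, b). a \<in> V \<and> b \<in> V \<and> {a, b} \<in> E}\<^sup>*)"

text \<open>Vertex connectivity: least number of vertices whose removal leaves a
  disconnected graph or at most one vertex (so K_m has connectivity m-1).\<close>

definition connectivity :: "'a set \<Rightarrow> 'a set set \<Rightarrow> nat" where
  "connectivity V E = Min (card ` {S. S \<subseteq> V \<and>
      (card (V - S) \<le> 1 \<or> \<not> graph_connected (V - S) {e \<in> E. e \<subseteq> V - S})})"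

definition graph_iso :: "'a set \<Rightarrow> 'a set set \<Rightarrow> 'b set \<Rightarrow> 'b set set \<Rightarrow> ('a \<Rightarrow> 'b) \<Rightarrow> bool" where
  "graph_iso V E V' E' f \<longleftrightarrow> bij_betw f V V' \<and>
     (\<forall>x\<in>V. \<forall>y\<in>V. {x, y} \<in> E \<longleftrightarrow> {f x, f y} \<in> E')"

text \<open>The k-molecule: b_j is Inl j (1 \<le> j \<le> k), v_i is Inr i (1 \<le> i \<le> h);
  the edge set \<B> is given as a set of edges on the indices {1..k}.\<close>

definition mol_verts :: "nat \<Rightarrow> nat \<Rightarrow> (nat + nat) set" where
  "mol_verts k h = Inl ` {1..k} \<union> Inr ` {1..h}"

definition mol_edges :: "nat \<Rightarrow> nat set set \<Rightarrow> nat \<Rightarrow> (nat + nat) set set" where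
  "mol_edges k Bc h = (\<lambda>e. Inl ` e) ` Bc \<union>
      {{Inr i, Inl j} | i j. i \<in> {1..h} \<and> j \<in> {1..k}}"

definition is_molecule :: "nat \<Rightarrow> nat set set \<Rightarrow> nat \<Rightarrow> bool" where
  "is_molecule k Bc h \<longleftrightarrow> k \<ge> 1 \<and> h \<ge> 1 \<and>
     Bc \<subseteq> {{a, b} | a b. a \<in> {1..k} \<and> b \<in> {1..k} \<and> a \<noteq> b} \<and>
     h \<ge> k - connectivity {1..k} Bc"

definition premolecule :: "'a set \<Rightarrow> 'a set set \<Rightarrow> 'a set \<Rightarrow> nat \<Rightarrow> bool" where
  "premolecule V E B k \<longleftrightarrow> B \<subseteq> V \<and> card B = k \<and>
     (\<exists>Bc h f. is_molecule k Bc h \<and> graph_iso V E (mol_verts k h) (mol_edges k Bc h) f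
        \<and> f ` B = Inl ` {1..k})"

definition ambiguous :: "'a set \<Rightarrow> 'a set set \<Rightarrow> nat \<Rightarrow> bool" where
  "ambiguous V E k \<longleftrightarrow> \<not> (\<exists>!B. premolecule V E B k)"

end

theory Submission imports Defs begin

lemma I3: "{1..3::nat} = {1,2,3}" by auto
lemma I2: "{1..2::nat} = {1,2}" by auto

definition PP :: "nat set set" where "PP = {{1,2},{1,3},{2,3}}"

lemma Pset: "{{a,b}|a b. a\<in>{1..3::nat}\<and>b\<in>{1..3}\<and>a\<noteq>b} = PP"
  unfolding PP_def I3 apply (auto simp: insert_commute)
  apply (rule_tac x=1 in exI, rule_tac x=2 in exI, simp)
  apply (rule_tac x=1 in exI, rule_tac x=3 in exI, simp)
  apply (rule_tac x=2 in exI, rule_tac x=3 in exI, simp)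
  done

lemma cardPP: "card PP = 3" unfolding PP_def by (simp add: doubleton_eq_iff)

definition madj :: "nat set set \<Rightarrow> nat+nat \<Rightarrow> nat+nat \<Rightarrow> bool" where
"madj Bc x y = (case x of Inl i \<Rightarrow> (case y of Inl j \<Rightarrow> {i,j} \<in> Bc | Inr _ \<Rightarrow> True)
    | Inr _ \<Rightarrow> (case y of Inl _ \<Rightarrow> True | Inr _ \<Rightarrow> False))"

lemma memE:
  assumes B: "Bc \<subseteq> {{a,b}|a b. a\<in>{1..k}\<and>b\<in>{1..k}\<and>a\<noteq>b}"
    and x: "x \<in> mol_verts k h" and y: "y \<in> mol_verts k h"
  shows "{x,y} \<in> mol_edges k Bc h \<longleftrightarrow> madj Bc x y"
proof (cases x)
  case (Inl i) note xi = this
  show ?thesis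
  proof (cases y)
    case (Inl j)
    have "{Inl i, Inl j} \<in> (\<lambda>e. Inl ` e) ` Bc \<longleftrightarrow> {i,j} \<in> Bc"
    proof
      assume "{Inl i, Inl j} \<in> (\<lambda>e. Inl ` e) ` Bc"
      then obtain e where e: "e \<in> Bc" "{Inl i, Inl j} = (Inl ` e :: (nat+nat) set)" by blast
      then have "Inl ` {i,j} = (Inl ` e :: (nat+nat) set)" by simp
      then have "e = {i,j}" by (metis inj_Inl inj_image_eq_iff)
      with e show "{i,j} \<in> Bc" by simp
    next
      assume "{i,j} \<in> Bc" then show "{Inl i, Inl j} \<in> (\<lambda>e. Inl ` e) ` Bc"
        by (metis image_empty image_eqI image_insert)
    qed
    then show ?thesis using xi Inl by (auto simp: mol_edges_def madj_def doubleton_eq_iff)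
  next
    case (Inr j)
    then show ?thesis using xi x y by (auto simp: mol_edges_def madj_def mol_verts_def doubleton_eq_iff)
  qed
next
  case (Inr i) note xi = this
  show ?thesis
  proof (cases y)
    case (Inl j)
    then show ?thesis using xi x y by (auto simp: mol_edges_def madj_def mol_verts_def doubleton_eq_iff)
  next
    case (Inr j)
    then show ?thesis using xi x y by (auto simp: mol_edges_def madj_def mol_verts_def doubleton_eq_iff)
  qed
qed

lemma Bc_PP: "is_molecule 3 Bc h \<Longrightarrow> Bc \<subseteq> PP"
  unfolding is_molecule_def using Pset by simp

lemma card_verts: "card (mol_verts k h) = k + h" "finite (mol_verts k h)"
proof -
  have "card (Inl ` {1..k} \<union> (Inr ` {1..h} :: (nat+nat) set)) = card (Inl ` {1..k} :: (nat+nat) set) + card (Inr ` {1..h} :: (nat+nat) set)"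
    by (rule card_Un_disjoint) auto
  also have "\<dots> = k + h" by (simp add: card_image)
  finally show "card (mol_verts k h) = k + h" unfolding mol_verts_def .
  show "finite (mol_verts k h)" unfolding mol_verts_def by simp
qed

lemma idprem:
  assumes "is_molecule 3 Bc h"
  shows "premolecule (mol_verts 3 h) (mol_edges 3 Bc h) (Inl ` {1..3}) 3"
  unfolding premolecule_def
proof (intro conjI exI)
  show "Inl ` {1..3} \<subseteq> mol_verts 3 h" by (auto simp: mol_verts_def)
  show "card (Inl ` {1..3::nat} :: (nat+nat) set) = 3" by (simp add: card_image)
  show "is_molecule 3 Bc h" by fact
  show "graph_iso (mol_verts 3 h) (mol_edges 3 Bc h) (mol_verts 3 h) (mol_edges 3 Bc h) id"
    unfolding graph_iso_def by simp
  show "id ` (Inl ` {1..3}) = (Inl ` {1..3} :: (nat+nat) set)" by simp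
qed

lemma uniq:
  assumes mol: "is_molecule 3 Bc h"
    and pm: "premolecule (mol_verts 3 h) (mol_edges 3 Bc h) B' 3"
    and ne: "B' \<noteq> Inl ` {1..3}"
  shows "\<exists>U. U \<subseteq> {1..3} \<and> card U = h \<and> (\<forall>i\<in>U. \<forall>j\<in>U. {i,j} \<notin> Bc)"
proof -
  let ?V = "mol_verts 3 h" and ?E = "mol_edges 3 Bc h"
  obtain Bc' h' f where B'V: "B' \<subseteq> ?V" and cB': "card B' = 3"
    and mol': "is_molecule 3 Bc' h'"
    and iso: "graph_iso ?V ?E (mol_verts 3 h') (mol_edges 3 Bc' h') f"
    and fB: "f ` B' = Inl ` {1..3}"
    using pm unfolding premolecule_def by (elim conjE exE) simp
  have bij: "bij_betw f ?V (mol_verts 3 h')" and ed: "\<forall>x\<in>?V. \<forall>y\<in>?V. {x, y} \<in> ?E \<longleftrightarrow> {f x, f y} \<in> mol_edges 3 Bc' h'"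
    using iso unfolding graph_iso_def by auto
  have B1: "Bc \<subseteq> {{a,b}|a b. a\<in>{1..3}\<and>b\<in>{1..3}\<and>a\<noteq>b}" using mol unfolding is_molecule_def by blast
  have B2: "Bc' \<subseteq> {{a,b}|a b. a\<in>{1..3}\<and>b\<in>{1..3}\<and>a\<noteq>b}" using mol' unfolding is_molecule_def by blast
  define W where "W = ?V - B'"
  have cW: "card W = h" unfolding W_def using B'V cB' card_verts[of 3 h]
    by (simp add: card_Diff_subset finite_subset)
  have fW: "\<exists>i. f x = Inr i" if "x \<in> W" for x
  proof -
    have xV: "x \<in> ?V" "x \<notin> B'" using that W_def by auto
    have "f x \<in> mol_verts 3 h'" by (rule bij_betw_apply[OF bij xV(1)])
    have inj: "inj_on f ?V" using bij unfolding bij_betw_def by (rule conjunct1)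
    have "f x \<notin> f ` B'"
      using inj_on_image_mem_iff[OF inj xV(1) B'V] xV(2) by simp
    then have "f x \<notin> Inl ` {1..3}" unfolding fB .
    with \<open>f x \<in> mol_verts 3 h'\<close> have "f x \<in> Inr ` {1..h'}" unfolding mol_verts_def by simp
    then show ?thesis by auto
  qed
  have indep: "{x,y} \<notin> ?E" if xyW: "x \<in> W" "y \<in> W" for x y
  proof -
    obtain i j where ij: "f x = Inr i" "f y = Inr j" using fW xyW by blast
    have xyV: "x \<in> ?V" "y \<in> ?V" using xyW unfolding W_def by auto
    have fxy: "f x \<in> mol_verts 3 h'" "f y \<in> mol_verts 3 h'" using bij_betw_apply[OF bij xyV(1)] bij_betw_apply[OF bij xyV(2)] by auto
    have "{f x, f y} \<notin> mol_edges 3 Bc' h'" using memE[OF B2 fxy] ij by (simp add: madj_def)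
    then show ?thesis using ed xyV by simp
  qed
  have WV: "W \<subseteq> ?V" unfolding W_def by auto
  show ?thesis
  proof (cases "W \<subseteq> Inr ` {1..h}")
    case True
    have "card (Inr ` {1..h} :: (nat+nat) set) = h" by (simp add: card_image)
    then have "W = Inr ` {1..h}" using True cW by (simp add: card_subset_eq)
    moreover have "B' = ?V - W" using B'V W_def by blast
    moreover have "?V - Inr ` {1..h} = Inl ` {1..3}" unfolding mol_verts_def by blast
    ultimately have "B' = Inl ` {1..3}" by simp
    with ne show ?thesis by simp
  next
    case False
    then obtain x where xW: "x \<in> W" and "x \<notin> Inr ` {1..h}" by blast
    then obtain j where xj: "x = Inl j" "j \<in> {1..3}" using WV unfolding mol_verts_def by auto
    have WL: "W \<subseteq> Inl ` {1..3}"
    proof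
      fix y assume yW: "y \<in> W"
      show "y \<in> Inl ` {1..3}"
      proof (rule ccontr)
        assume "y \<notin> Inl ` {1..3}"
        then obtain i where "y = Inr i" using yW WV unfolding mol_verts_def by auto
        then have "madj Bc x y" using xj by (simp add: madj_def)
        then have "{x,y} \<in> ?E" using memE[OF B1] xW yW WV by blast
        with indep xW yW show False by blast
      qed
    qed
    define U where "U = {i \<in> {1..3}. Inl i \<in> W}"
    have WU: "W = Inl ` U" using WL unfolding U_def by auto
    have "card U = h" using cW WU by (simp add: card_image)
    moreover have "\<forall>i\<in>U. \<forall>j\<in>U. {i,j} \<notin> Bc"
    proof (intro ballI)
      fix i j assume "i \<in> U" "j \<in> U"
      then have "Inl i \<in> W" "Inl j \<in> W" unfolding U_def by auto
      then have "{Inl i, Inl j} \<notin> ?E" using indep by blast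
      then show "{i,j} \<notin> Bc" using memE[OF B1, of "Inl i" h "Inl j"] \<open>Inl i \<in> W\<close> \<open>Inl j \<in> W\<close> WV
        by (auto simp: madj_def)
    qed
    moreover have "U \<subseteq> {1..3}" unfolding U_def by auto
    ultimately show ?thesis by blast
  qed
qed


lemma indep_bounds:
  assumes U: "U \<subseteq> {1..3}" and ind: "\<forall>i\<in>U. \<forall>j\<in>U. {i,j} \<notin> Bc" and B: "Bc \<subseteq> PP"
  shows "card U \<le> 3" "2 \<le> card U \<Longrightarrow> Bc \<noteq> PP" "card U = 3 \<Longrightarrow> Bc = {}"
proof -
  have fU: "finite U" using U finite_subset by blast
  show "card U \<le> 3" using card_mono[OF _ U] by simp
  show "Bc \<noteq> PP" if "2 \<le> card U"
  proof -
    have "\<not> card U \<le> 1" using that by simp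
    then obtain a b where ab: "a \<in> U" "b \<in> U" "a \<noteq> b" using card_le_Suc0_iff_eq[OF fU] by auto
    have "a \<in> {1..3}" "b \<in> {1..3}" using U ab by auto
    then have "{a,b} \<in> {{a,b}|a b. a\<in>{1..3::nat}\<and>b\<in>{1..3}\<and>a\<noteq>b}" using ab by blast
    then have "{a,b} \<in> PP" unfolding Pset .
    moreover have "{a,b} \<notin> Bc" using ind ab by blast
    ultimately show ?thesis by blast
  qed
  show "Bc = {}" if "card U = 3"
  proof -
    have "U = {1..3}" using card_subset_eq[OF _ U] that by simp
    then have "{1,2} \<notin> Bc" "{1,3} \<notin> Bc" "{2,3} \<notin> Bc" using ind by (auto simp: I3)
    then show ?thesis using B unfolding PP_def by blast
  qed
qed

lemma notconn:
  assumes "x \<in> V" "y \<in> V" "x \<noteq> y" "\<forall>z. {x,z} \<notin> E"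
  shows "\<not> graph_connected V E"
proof
  assume "graph_connected V E"
  then have "(x, y) \<in> {(a, b). a \<in> V \<and> b \<in> V \<and> {a, b} \<in> E}\<^sup>*"
    using assms unfolding graph_connected_def by blast
  then show False
  proof (cases rule: converse_rtranclE)
    case base then show ?thesis using assms by simp
  next
    case (step z) then show ?thesis using assms by auto
  qed
qed

lemma conn_le:
  assumes "S \<subseteq> {1..3::nat}" "\<not> graph_connected ({1..3}-S) {e\<in>Bc. e \<subseteq> {1..3}-S}"
  shows "connectivity {1..3} Bc \<le> card S"
  unfolding connectivity_def
proof (rule Min_le)
  show "finite (card ` {S. S \<subseteq> {1..3::nat} \<and> (card ({1..3} - S) \<le> 1 \<or>
       \<not> graph_connected ({1..3} - S) {e \<in> Bc. e \<subseteq> {1..3} - S})})"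
    by (rule finite_imageI, rule finite_subset[of _ "Pow {1..3}"]) auto
  show "card S \<in> card ` {S. S \<subseteq> {1..3::nat} \<and> (card ({1..3} - S) \<le> 1 \<or>
       \<not> graph_connected ({1..3} - S) {e \<in> Bc. e \<subseteq> {1..3} - S})}"
    using assms by blast
qed

lemma PP_sub: assumes "e \<in> PP" "e \<subseteq> {a,b}" shows "e = {a,b}"
proof -
  have "card e = 2" using assms(1) unfolding PP_def by auto
  moreover have "card {a,b} \<le> 2" by (simp add: card_insert_le_m1)
  moreover have "card e \<le> card {a,b}" using card_mono[OF _ assms(2)] by simp
  ultimately show ?thesis using card_subset_eq[OF _ assms(2)] by simp
qed

lemma nc_helper:
  assumes "a \<noteq> b" "{a,b} \<notin> Bc" "Bc \<subseteq> PP"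
  shows "\<not> graph_connected {a,b} {e\<in>Bc. e \<subseteq> {a,b}}"
proof (rule notconn[of a _ b])
  show "\<forall>z. {a,z} \<notin> {e\<in>Bc. e \<subseteq> {a,b}}"
  proof (intro allI notI)
    fix z assume "{a,z} \<in> {e\<in>Bc. e \<subseteq> {a,b}}"
    then have z: "{a,z} \<in> Bc" "{a,z} \<subseteq> {a,b}" by auto
    then have "{a,z} = {a,b}" using PP_sub assms(3) by blast
    with z assms(2) show False by simp
  qed
qed (use assms in auto)

lemma conn1:
  assumes B: "Bc \<subseteq> PP" and c: "card Bc \<le> 2"
  shows "connectivity {1..3} Bc \<le> 1"
proof -
  have fB: "finite Bc" using B finite_subset unfolding PP_def by blast
  have "\<not> PP \<subseteq> Bc"
  proof
    assume "PP \<subseteq> Bc" then have "card PP \<le> card Bc" using card_mono[OF fB] by blast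
    then show False using c cardPP by simp
  qed
  then obtain e where e: "e \<in> PP" "e \<notin> Bc" by blast
  have "e = {1,2} \<or> e = {1,3} \<or> e = {2,3}" using e unfolding PP_def by auto
  then show ?thesis
  proof (elim disjE)
    assume ee: "e = {1,2}"
    have "{1..3}-{3} = {1,2::nat}" by (auto simp: I3)
    moreover have "\<not> graph_connected {1,2::nat} {e\<in>Bc. e \<subseteq> {1,2}}"
      by (rule nc_helper) (use e ee B in auto)
    ultimately have "\<not> graph_connected ({1..3}-{3}) {e\<in>Bc. e \<subseteq> {1..3}-{3}}" by simp
    from conn_le[OF _ this] show ?thesis by simp
  next
    assume ee: "e = {1,3}"
    have "{1..3}-{2} = {1,3::nat}" by (auto simp: I3)
    moreover have "\<not> graph_connected {1,3::nat} {e\<in>Bc. e \<subseteq> {1,3}}"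
      by (rule nc_helper) (use e ee B in auto)
    ultimately have "\<not> graph_connected ({1..3}-{2}) {e\<in>Bc. e \<subseteq> {1..3}-{2}}" by simp
    from conn_le[OF _ this] show ?thesis by simp
  next
    assume ee: "e = {2,3}"
    have "{1..3}-{1} = {2,3::nat}" by (auto simp: I3)
    moreover have "\<not> graph_connected {2,3::nat} {e\<in>Bc. e \<subseteq> {2,3}}"
      by (rule nc_helper) (use e ee B in auto)
    ultimately have "\<not> graph_connected ({1..3}-{1}) {e\<in>Bc. e \<subseteq> {1..3}-{1}}" by simp
    from conn_le[OF _ this] show ?thesis by simp
  qed
qed

lemma wit3: "x \<in> {1..3::nat} \<Longrightarrow> y \<in> {1..3} \<Longrightarrow> x \<noteq> y \<Longrightarrow> \<forall>e\<in>Bc. x \<notin> e \<Longrightarrow>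
   \<exists>x\<in>{1..3::nat}. \<exists>y\<in>{1..3}. x \<noteq> y \<and> (\<forall>e\<in>Bc. x \<notin> e)" by blast

lemma conn0:
  assumes B: "Bc \<subseteq> PP" and c: "card Bc \<le> 1"
  shows "connectivity {1..3} Bc = 0"
proof -
  have fB: "finite Bc" using B finite_subset unfolding PP_def by blast
  have "\<exists>x\<in>{1..3::nat}. \<exists>y\<in>{1..3}. x \<noteq> y \<and> (\<forall>e\<in>Bc. x \<notin> e)"
  proof (cases "Bc = {}")
    case True then show ?thesis by (intro wit3[of 1 2]) auto
  next
    case False
    then have "card Bc \<noteq> 0" using fB by simp
    then have "card Bc = 1" using c by linarith
    then obtain e where Be: "Bc = {e}" by (rule card_1_singletonE)
    then have "e \<in> PP" using B by simp
    then have "e = {1,2} \<or> e = {1,3} \<or> e = {2,3}" unfolding PP_def by simp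
    then show ?thesis
    proof (elim disjE)
      assume "e = {1,2}" then show ?thesis using Be by (intro wit3[of 3 1]) auto
    next
      assume "e = {1,3}" then show ?thesis using Be by (intro wit3[of 2 1]) auto
    next
      assume "e = {2,3}" then show ?thesis using Be by (intro wit3[of 1 2]) auto
    qed
  qed
  then obtain x y where xy: "x \<in> {1..3::nat}" "y \<in> {1..3}" "x \<noteq> y" "\<forall>e\<in>Bc. x \<notin> e" by blast
  have "\<not> graph_connected ({1..3}-{}) {e\<in>Bc. e \<subseteq> {1..3}-{}}"
  proof (rule notconn[of x _ y])
    show "\<forall>z. {x,z} \<notin> {e\<in>Bc. e \<subseteq> {1..3}-{}}" using xy(4) by blast
  qed (use xy in auto)
  from conn_le[OF _ this] show ?thesis by simp
qed


lemma ambig: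
  assumes mol: "is_molecule 3 Bc h"
    and fV: "\<forall>x\<in>mol_verts 3 h. f x \<in> mol_verts 3 h"
    and inv: "\<forall>x\<in>mol_verts 3 h. f (f x) = x"
    and edge: "\<forall>x\<in>mol_verts 3 h. \<forall>y\<in>mol_verts 3 h. madj Bc x y = madj Bc (f x) (f y)"
    and neq: "f ` Inl ` {1..3} \<noteq> Inl ` {1..3}"
  shows "ambiguous (mol_verts 3 h) (mol_edges 3 Bc h) 3"
proof -
  let ?V = "mol_verts 3 h" and ?E = "mol_edges 3 Bc h" and ?B1 = "Inl ` {1..3} :: (nat+nat) set"
  have B1V: "?B1 \<subseteq> ?V" unfolding mol_verts_def by auto
  have p1: "premolecule ?V ?E ?B1 3" by (rule idprem[OF mol])
  have bij: "bij_betw f ?V ?V" by (rule bij_betw_byWitness[of ?V f f]) (use fV inv in auto)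
  have inj: "inj_on f ?V" using bij unfolding bij_betw_def by (rule conjunct1)
  have Bsub: "Bc \<subseteq> {{a,b}|a b. a\<in>{1..3}\<and>b\<in>{1..3}\<and>a\<noteq>b}" using mol unfolding is_molecule_def by (elim conjE)
  have iso: "graph_iso ?V ?E ?V ?E f"
    unfolding graph_iso_def
  proof (intro conjI ballI)
    show "bij_betw f ?V ?V" by (rule bij)
    fix x y assume xy: "x \<in> ?V" "y \<in> ?V"
    have fxy: "f x \<in> ?V" "f y \<in> ?V" using fV xy by auto
    show "{x, y} \<in> ?E \<longleftrightarrow> {f x, f y} \<in> ?E"
      using memE[OF Bsub xy] memE[OF Bsub fxy] edge xy by simp
  qed
  have cB1: "card ?B1 = 3" by (simp add: card_image)
  have p2: "premolecule ?V ?E (f ` ?B1) 3"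
    unfolding premolecule_def
  proof (intro conjI exI)
    show "f ` ?B1 \<subseteq> ?V" using fV B1V by blast
    show "card (f ` ?B1) = 3" using card_image[OF inj_on_subset[OF inj B1V]] cB1 by simp
    show "is_molecule 3 Bc h" by (rule mol)
    show "graph_iso ?V ?E ?V ?E f" by (rule iso)
    have "f ` f ` ?B1 = (\<lambda>x. f (f x)) ` ?B1" by (simp add: image_image)
    also have "\<dots> = id ` ?B1" by (rule image_cong) (use inv B1V in auto)
    finally show "f ` f ` ?B1 = ?B1" by simp
  qed
  show ?thesis unfolding ambiguous_def using p1 p2 neq by blast
qed

definition sw :: "'a \<Rightarrow> 'a \<Rightarrow> 'a \<Rightarrow> 'a" where
  "sw a b x = (if x = a then b else if x = b then a else x)"

lemma V1: "mol_verts 3 1 = {Inl 1, Inl 2, Inl 3, Inr 1}" by (auto simp: mol_verts_def I3)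
lemma V2: "mol_verts 3 2 = {Inl 1, Inl 2, Inl 3, Inr 1, Inr 2}" by (auto simp: mol_verts_def I3 I2)
lemma L3: "(Inl ` {1..3} :: (nat+nat) set) = {Inl 1, Inl 2, Inl 3}" by (auto simp: I3)

theorem mainTheorem6:
  fixes Bc :: "nat set set" and h :: nat
  assumes "is_molecule 3 Bc h"
  shows "ambiguous (mol_verts 3 h) (mol_edges 3 Bc h) 3 \<longleftrightarrow>
           (card Bc = 3 \<and> h = 1) \<or> (card Bc = 2 \<and> h = 2) \<or> (card Bc = 0 \<and> h = 3)"
proof -
  have B: "Bc \<subseteq> PP" by (rule Bc_PP[OF assms])
  have fPP: "finite PP" unfolding PP_def by simp
  have fB: "finite Bc" using B fPP finite_subset by blast
  have cB: "card Bc \<le> 3" using card_mono[OF fPP B] cardPP by simp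
  have h1: "h \<ge> 1" and hc: "h \<ge> 3 - connectivity {1..3} Bc" using assms unfolding is_molecule_def by auto
  have hB2: "h \<ge> 2" if "card Bc \<le> 2" using conn1[OF B that] hc by linarith
  have hB1: "h \<ge> 3" if "card Bc \<le> 1" using conn0[OF B that] hc by linarith
  have eqPP: "Bc = PP" if "card Bc = 3" using card_subset_eq[OF fPP B] that cardPP by simp
  have eq0: "Bc = {}" if "card Bc = 0" using fB that by simp
  show ?thesis
  proof
    assume amb: "ambiguous (mol_verts 3 h) (mol_edges 3 Bc h) 3"
    show "(card Bc = 3 \<and> h = 1) \<or> (card Bc = 2 \<and> h = 2) \<or> (card Bc = 0 \<and> h = 3)"
    proof (rule ccontr)
      assume nr: "\<not> ((card Bc = 3 \<and> h = 1) \<or> (card Bc = 2 \<and> h = 2) \<or> (card Bc = 0 \<and> h = 3))"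
      have "\<exists>!B. premolecule (mol_verts 3 h) (mol_edges 3 Bc h) B 3"
      proof (rule ex1I[of _ "Inl ` {1..3}"])
        show "premolecule (mol_verts 3 h) (mol_edges 3 Bc h) (Inl ` {1..3}) 3" by (rule idprem[OF assms])
        fix B' assume pm: "premolecule (mol_verts 3 h) (mol_edges 3 Bc h) B' 3"
        show "B' = Inl ` {1..3}"
        proof (rule ccontr)
          assume ne: "B' \<noteq> Inl ` {1..3}"
          obtain U where U: "U \<subseteq> {1..3}" "card U = h" "\<forall>i\<in>U. \<forall>j\<in>U. {i,j} \<notin> Bc"
            using uniq[OF assms pm ne] by blast
          note ib = indep_bounds[OF U(1) U(3) B]
          have "card Bc = 3 \<or> card Bc = 2 \<or> card Bc \<le> 1" using cB by linarith
          then show False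
          proof (elim disjE)
            assume c3: "card Bc = 3"
            then have "h \<noteq> 1" using nr by simp
            then have "2 \<le> card U" using U(2) h1 by simp
            then show False using ib(2) eqPP[OF c3] by simp
          next
            assume c2: "card Bc = 2"
            then have "h \<noteq> 2" using nr by simp
            then have "card U = 3" using U(2) hB2 c2 ib(1) by simp
            then show False using ib(3) c2 by simp
          next
            assume c1: "card Bc \<le> 1"
            then have "card U = 3" using U(2) hB1 ib(1) by simp
            then have "Bc = {}" using ib(3) by simp
            then have "h \<noteq> 3" using nr by simp
            then show False using \<open>card U = 3\<close> U(2) by simp
          qed
        qed
      qed
      with amb show False unfolding ambiguous_def by blast
    qed
  next
    assume "(card Bc = 3 \<and> h = 1) \<or> (card Bc = 2 \<and> h = 2) \<or> (card Bc = 0 \<and> h = 3)"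
    then consider (a) "card Bc = 3" "h = 1" | (b) "card Bc = 2" "h = 2" | (c) "card Bc = 0" "h = 3" by (elim disjE conjE) auto
    then show "ambiguous (mol_verts 3 h) (mol_edges 3 Bc h) 3"
    proof cases
      case a
      have BP: "Bc = PP" by (rule eqPP[OF a(1)])
      show ?thesis
        apply (rule ambig[OF assms, of "sw (Inl 3) (Inr 1)"])
        unfolding a(2) BP V1 L3 by (auto simp: sw_def madj_def PP_def doubleton_eq_iff)
    next
      case c
      have BE: "Bc = {}" by (rule eq0[OF c(1)])
      show ?thesis
        apply (rule ambig[OF assms, of "case_sum Inr Inl"])
        unfolding c(2) BE L3 by (auto simp: mol_verts_def madj_def split: sum.split)
    next
      case b
      have "\<not> PP \<subseteq> Bc"
      proof
        assume "PP \<subseteq> Bc" then have "card PP \<le> card Bc" by (rule card_mono[OF fB])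
        then show False using b(1) cardPP by simp
      qed
      then obtain e where e: "e \<in> PP" "e \<notin> Bc" by (auto simp only: subset_iff)
      have "card (PP - {e}) = 2" using e(1) cardPP fPP by simp
      moreover have "Bc \<subseteq> PP - {e}" using B e by blast
      ultimately have Be: "Bc = PP - {e}" using card_subset_eq[of "PP - {e}" Bc] fPP b(1) by simp
      have "e = {1,2} \<or> e = {1,3} \<or> e = {2,3}" using e(1) unfolding PP_def by simp
      then show ?thesis
      proof (elim disjE)
        assume ee: "e = {1,2}"
        have "PP - {e} = {{1,3},{2,3}}" unfolding ee PP_def by (auto simp: doubleton_eq_iff)
        then have Bc2: "Bc = {{1,3},{2,3}}" using Be by simp
        show ?thesis
          apply (rule ambig[OF assms, of "sw (Inl 1) (Inr 1) \<circ> sw (Inl 2) (Inr 2)"])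
          unfolding b(2) Bc2 V2 L3 by (simp_all add: sw_def madj_def doubleton_eq_iff) (auto simp: set_eq_iff)
      next
        assume ee: "e = {1,3}"
        have "PP - {e} = {{1,2},{2,3}}" unfolding ee PP_def by (auto simp: doubleton_eq_iff)
        then have Bc2: "Bc = {{1,2},{2,3}}" using Be by simp
        show ?thesis
          apply (rule ambig[OF assms, of "sw (Inl 1) (Inr 1) \<circ> sw (Inl 3) (Inr 2)"])
          unfolding b(2) Bc2 V2 L3 by (simp_all add: sw_def madj_def doubleton_eq_iff) (auto simp: set_eq_iff)
      next
        assume ee: "e = {2,3}"
        have "PP - {e} = {{1,2},{1,3}}" unfolding ee PP_def by (auto simp: doubleton_eq_iff)
        then have Bc2: "Bc = {{1,2},{1,3}}" using Be by simp
        show ?thesis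
          apply (rule ambig[OF assms, of "sw (Inl 2) (Inr 1) \<circ> sw (Inl 3) (Inr 2)"])
          unfolding b(2) Bc2 V2 L3 by (simp_all add: sw_def madj_def doubleton_eq_iff) (auto simp: set_eq_iff)
      qed
    qed
  qed
qed

end
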